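(* Consider the segregation process with window size $w$ on a ring network of size $n$, started from a uniformly random initial configuration. For any fixed $w$, as $n\to\infty$, the probability that the process eventually reaches a frozen configuration converges to $1$.
   Context: Segregation process: the nodes of an $n$-cycle are indexed mod $n$; at every time there is a bijection between $n$ individuals and the nodes, and each individual has a type (label) $x$ or $o$. Initially each node independently receives label $x$ or $o$ with probability $1/2$ each. With sign $+1$ for $x$ and $-1$ for $o$, the $x$-bias $\beta_t(i)$ of node $i$ at time $t$ is the sum of the signs of the labels of nodes $i-w,\dots,i+w$ (mod $n$). An individual of type $x$ at node $i$ is happy iff $\beta_t(i)>0$, one of type $o$ iff $\beta_t(i)<0$; otherwise unhappy. At each time step two individuals are chosen uniformly at random; if both are unhappy and of opposite types they exchange nodes, otherwise nothing changes. A frozen configuration is one in which no further swaps are possible (i.e. there are not both an unhappy $x$ and an unhappy $o$). *)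

theory Defs
  imports "HOL-Probability.Probability"
begin

text \<open>A configuration of the n-cycle is a list of labels of length n;
  node i (0 \<le> i < n) carries label cfg ! i, where True = type x and False = type o.
  Individuals are identified with the nodes they currently occupy (the dynamics only
  depend on the labels).\<close>

definition sgn_lab :: "bool \<Rightarrow> int" where
  "sgn_lab b = (if b then 1 else -1)"

definition xbias :: "nat \<Rightarrow> bool list \<Rightarrow> nat \<Rightarrow> int" where
  "xbias w cfg i =
     (\<Sum>d\<in>{-int w..int w}. sgn_lab (cfg ! nat ((int i + d) mod int (length cfg))))"

definition happy :: "nat \<Rightarrow> bool list \<Rightarrow> nat \<Rightarrow> bool" where
  "happy w cfg i = (if cfg ! i then xbias w cfg i > 0 else xbias w cfg i < 0)"

definition unhappy :: "nat \<Rightarrow> bool list \<Rightarrow> nat \<Rightarrow> bool" where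
  "unhappy w cfg i = (\<not> happy w cfg i)"

definition frozen :: "nat \<Rightarrow> bool list \<Rightarrow> bool" where
  "frozen w cfg = (\<not> ((\<exists>i<length cfg. cfg ! i \<and> unhappy w cfg i) \<and>
                        (\<exists>j<length cfg. \<not> cfg ! j \<and> unhappy w cfg j)))"

definition swap_nodes :: "bool list \<Rightarrow> nat \<Rightarrow> nat \<Rightarrow> bool list" where
  "swap_nodes cfg i j = cfg[i := cfg ! j, j := cfg ! i]"

text \<open>One step: a uniformly random pair of distinct individuals (equivalently, of
  distinct nodes); they exchange nodes iff both are unhappy and of opposite types.\<close>
definition step :: "nat \<Rightarrow> bool list \<Rightarrow> bool list pmf" where
  "step w cfg =
     (if length cfg < 2 then return_pmf cfg
      else map_pmf (\<lambda>(i, j). if cfg ! i \<noteq> cfg ! j \<and> unhappy w cfg i \<and> unhappy w cfg j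
                              then swap_nodes cfg i j else cfg)
             (pmf_of_set {(i, j). i < j \<and> j < length cfg}))"

definition init_cfg :: "nat \<Rightarrow> bool list pmf" where
  "init_cfg n = pmf_of_set {cfg. length cfg = n}"

primrec traj :: "nat \<Rightarrow> nat \<Rightarrow> nat \<Rightarrow> bool list list pmf" where
  "traj w n 0 = map_pmf (\<lambda>c. [c]) (init_cfg n)"
| "traj w n (Suc t) = bind_pmf (traj w n t) (\<lambda>xs. map_pmf (\<lambda>c. xs @ [c]) (step w (last xs)))"

definition reach_within :: "nat \<Rightarrow> nat \<Rightarrow> nat \<Rightarrow> real" where
  "reach_within w n t = measure_pmf.prob (traj w n t) {xs. \<exists>c\<in>set xs. frozen w c}"

text \<open>Probability that the process eventually reaches a frozen configuration
  (limit of the nondecreasing sequence reach_within w n t, t \<rightarrow> \<infinity>).\<close>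
definition reach_frozen_prob :: "nat \<Rightarrow> nat \<Rightarrow> real" where
  "reach_frozen_prob w n = (SUP t. reach_within w n t)"

end

theory Submission imports Defs begin

definition sg :: "bool list \<Rightarrow> nat \<Rightarrow> int" where "sg c k = sgn_lab (c!k)"
definition idx :: "nat \<Rightarrow> nat \<Rightarrow> int \<Rightarrow> nat" where "idx n k d = nat((int k + d) mod int n)"
definition BB :: "nat \<Rightarrow> nat \<Rightarrow> (nat\<Rightarrow>int) \<Rightarrow> (nat\<Rightarrow>int) \<Rightarrow> int" where
 "BB w n f g = (\<Sum>k<n. f k * (\<Sum>d\<in>{-int w..int w}. g (idx n k d)))"

lemma idx_lt: "n > 0 \<Longrightarrow> idx n k d < n"
  unfolding idx_def by (simp add: nat_less_iff)

lemma idx_inv: "n > 0 \<Longrightarrow> k < n \<Longrightarrow> idx n (idx n k d) (-d) = k"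
  unfolding idx_def
proof -
  assume n: "n > 0" "k < n"
  have "int (nat ((int k + d) mod int n)) = (int k + d) mod int n" using n by simp
  then have "(int (nat ((int k + d) mod int n)) + - d) mod int n = ((int k + d) mod int n - d) mod int n" by simp
  also have "\<dots> = (int k) mod int n" by (simp add: mod_diff_left_eq)
  also have "\<dots> = int k" using n by simp
  finally show "nat ((int (nat ((int k + d) mod int n)) + - d) mod int n) = k" by simp
qed

lemma BB_swap: "BB w n f g = (\<Sum>d\<in>{-int w..int w}. \<Sum>k<n. f k * g (idx n k d))"
  unfolding BB_def by (simp add: sum_distrib_left sum.swap[of _ "{..<n}"])

lemma BB_sym: assumes n: "n > 0" shows "BB w n f g = BB w n g f"
proof -
  have 1: "(\<Sum>k<n. f k * g (idx n k d)) = (\<Sum>m<n. g m * f (idx n m (-d)))" for d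
    by (rule sum.reindex_bij_witness[where i="\<lambda>m. idx n m (-d)" and j="\<lambda>k. idx n k d"])
       (use n in \<open>auto simp: idx_inv idx_lt\<close>, metis idx_inv minus_minus n)
  have "BB w n f g = (\<Sum>d\<in>{-int w..int w}. \<Sum>m<n. g m * f (idx n m (-d)))"
    unfolding BB_swap 1 ..
  also have "\<dots> = (\<Sum>d\<in>{-int w..int w}. \<Sum>m<n. g m * f (idx n m d))"
    by (rule sum.reindex_bij_witness[where i="uminus" and j="uminus"]) auto
  also have "\<dots> = BB w n g f" unfolding BB_swap ..
  finally show ?thesis .
qed

lemma BB_add1: "BB w n (\<lambda>k. f k + g k) h = BB w n f h + BB w n g h"
  unfolding BB_def by (simp add: algebra_simps sum.distrib)
lemma BB_add2: "BB w n h (\<lambda>k. f k + g k) = BB w n h f + BB w n h g"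
  unfolding BB_def by (simp add: algebra_simps sum.distrib)

definition Phi :: "nat \<Rightarrow> bool list \<Rightarrow> int" where
  "Phi w c = BB w (length c) (sg c) (sg c)"

lemma xbias_eq: "xbias w c k = (\<Sum>d\<in>{-int w..int w}. sg c (idx (length c) k d))"
  unfolding xbias_def sg_def idx_def ..

lemma sgn_lab_alt: "sgn_lab b = 1 - 2 * (if b then 0 else 1)"
  unfolding sgn_lab_def by simp

lemma xbias_odd: "odd (xbias w c k)"
proof -
  have "xbias w c k = (\<Sum>d\<in>{-int w..int w}. 1) - 2 * (\<Sum>d\<in>{-int w..int w}. (if c ! nat ((int k + d) mod int (length c)) then 0 else 1))"
    unfolding xbias_def sgn_lab_alt by (simp add: sum_subtractf sum_distrib_left)
  also have "(\<Sum>d\<in>{-int w..int w}. (1::int)) = 2 * int w + 1" by simp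
  finally show ?thesis by simp
qed

lemma idx_inj:
  assumes n: "2*w+1 \<le> n" and d: "d \<in> {-int w..int w}" "d' \<in> {-int w..int w}"
    and e: "idx n k d = idx n k d'"
  shows "d = d'"
proof -
  have np: "int n > 0" using n by simp
  have "(int k + d) mod int n = (int k + d') mod int n"
    using e np unfolding idx_def by (simp add: eq_nat_nat_iff)
  then have "int n dvd (int k + d) - (int k + d')" by (simp add: mod_eq_dvd_iff)
  then have dv: "int n dvd (d - d')" by simp
  have "\<bar>d - d'\<bar> < int n" using d n by auto
  show ?thesis
  proof (rule ccontr)
    assume "d \<noteq> d'"
    then have "d - d' \<noteq> 0" by simp
    from dvd_imp_le_int[OF this dv] have "\<bar>int n\<bar> \<le> \<bar>d - d'\<bar>" .
    with \<open>\<bar>d - d'\<bar> < int n\<close> show False by simp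
  qed
qed

lemma card_hit_le1:
  assumes n: "2*w+1 \<le> n"
  shows "card {d\<in>{-int w..int w}. idx n k d = m} \<le> 1"
proof -
  have "card {d\<in>{-int w..int w}. idx n k d = m} \<le> Suc 0"
  proof -
    have fin: "finite {d\<in>{-int w..int w}. idx n k d = m}"
      by (rule finite_subset[of _ "{-int w..int w}"]) auto
    show ?thesis unfolding card_le_Suc0_iff_eq[OF fin] using idx_inj[OF n, of _ _ k] by force
  qed
  then show ?thesis by simp
qed

lemma card_hit_self:
  assumes n: "2*w+1 \<le> n" and k: "k < n"
  shows "card {d\<in>{-int w..int w}. idx n k d = k} = 1"
proof -
  have "{d\<in>{-int w..int w}. idx n k d = k} = {0}"
  proof
    show "{0} \<subseteq> {d\<in>{-int w..int w}. idx n k d = k}" using k unfolding idx_def by auto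
    show "{d\<in>{-int w..int w}. idx n k d = k} \<subseteq> {0}"
    proof
      fix d assume "d \<in> {d\<in>{-int w..int w}. idx n k d = k}"
      then have "d \<in> {-int w..int w}" "idx n k d = idx n k 0" using k unfolding idx_def by auto
      then show "d \<in> {0}" using idx_inj[OF n, of d 0 k] by auto
    qed
  qed
  then show ?thesis by simp
qed

lemma sum_hit: "(\<Sum>d\<in>{-int w..int w}. (if idx n k d = m then (1::int) else 0)) = int (card {d\<in>{-int w..int w}. idx n k d = m})"
  by (simp add: sum.If_cases Int_def)

lemma Phi_swap:
  assumes n: "2*w+1 \<le> length c" and ij: "i < length c" "j < length c" "c!i" "\<not> c!j"
    and ui: "unhappy w c i" and uj: "unhappy w c j"
  shows "Phi w (swap_nodes c i j) \<ge> Phi w c + 4"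
proof -
  let ?n = "length c"
  let ?D = "{-int w..int w}"
  have neq: "i \<noteq> j" using ij by auto
  define \<delta> where "\<delta> k = (if k = i then -2 else if k = j then 2 else (0::int))" for k
  define c' where "c' = swap_nodes c i j"
  have len: "length c' = ?n" unfolding c'_def swap_nodes_def by simp
  have sgc': "sg c' k = sg c k + \<delta> k" for k
    using ij neq unfolding c'_def swap_nodes_def sg_def \<delta>_def sgn_lab_def
    by (cases "k = i"; cases "k = j"; auto simp: nth_list_update)
  have sgc'': "sg c' = (\<lambda>k. sg c k + \<delta> k)" using sgc' by auto
  have np: "?n > 0" using ij by auto
  have lin: "\<And>X::nat\<Rightarrow>int. (\<Sum>k<?n. \<delta> k * X k) = -2 * X i + 2 * X j"
  proof -
    fix X :: "nat \<Rightarrow> int"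
    have "(\<Sum>k<?n. \<delta> k * X k) = (\<Sum>k<?n. (if k = i then -2 * X i else 0) + (if k = j then 2 * X j else 0))"
      by (rule sum.cong) (auto simp: \<delta>_def neq)
    also have "\<dots> = -2 * X i + 2 * X j" using ij by (simp add: sum.distrib)
    finally show "(\<Sum>k<?n. \<delta> k * X k) = -2 * X i + 2 * X j" .
  qed
  have B1: "BB w ?n \<delta> (sg c) = -2 * xbias w c i + 2 * xbias w c j"
    unfolding BB_def xbias_eq by (rule lin)
  have Y: "(\<Sum>d\<in>?D. \<delta> (idx ?n k d)) = -2 * int (card {d\<in>?D. idx ?n k d = i}) + 2 * int (card {d\<in>?D. idx ?n k d = j})" for k
  proof -
    have "(\<Sum>d\<in>?D. \<delta> (idx ?n k d)) = (\<Sum>d\<in>?D. -2 * (if idx ?n k d = i then 1 else 0) + 2 * (if idx ?n k d = j then 1 else 0))"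
      by (rule sum.cong) (auto simp: \<delta>_def neq)
    also have "\<dots> = (\<Sum>d\<in>?D. -2 * (if idx ?n k d = i then 1 else 0)) + (\<Sum>d\<in>?D. 2 * (if idx ?n k d = j then 1 else 0))"
      by (rule sum.distrib)
    also have "\<dots> = -2 * (\<Sum>d\<in>?D. (if idx ?n k d = i then 1 else 0)) + 2 * (\<Sum>d\<in>?D. (if idx ?n k d = j then 1 else 0))"
      by (simp only: sum_distrib_left)
    finally show ?thesis unfolding sum_hit .
  qed
  have B2: "BB w ?n \<delta> \<delta> \<ge> 0"
  proof -
    have "BB w ?n \<delta> \<delta> = -2 * (\<Sum>d\<in>?D. \<delta> (idx ?n i d)) + 2 * (\<Sum>d\<in>?D. \<delta> (idx ?n j d))"
      unfolding BB_def by (rule lin)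
    moreover have "card {d\<in>?D. idx ?n i d = i} = 1" "card {d\<in>?D. idx ?n j d = j} = 1"
      using card_hit_self[OF n] ij by auto
    moreover have "card {d\<in>?D. idx ?n i d = j} \<le> 1" "card {d\<in>?D. idx ?n j d = i} \<le> 1"
      using card_hit_le1[OF n] by auto
    ultimately show ?thesis unfolding Y by simp
  qed
  have "Phi w c' = BB w ?n (sg c) (sg c) + BB w ?n (sg c) \<delta> + BB w ?n \<delta> (sg c) + BB w ?n \<delta> \<delta>"
    unfolding Phi_def len sgc'' BB_add1 BB_add2 by simp
  also have "BB w ?n (sg c) \<delta> = BB w ?n \<delta> (sg c)" using BB_sym[OF np] .
  finally have eq: "Phi w c' = Phi w c + 2 * (-2 * xbias w c i + 2 * xbias w c j) + BB w ?n \<delta> \<delta>"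
    unfolding Phi_def B1 by simp
  have bi: "xbias w c i \<le> 0" using ui ij unfolding unhappy_def happy_def by auto
  have bj: "xbias w c j \<ge> 0" using uj ij unfolding unhappy_def happy_def by auto
  have "xbias w c j - xbias w c i \<ge> 1"
  proof (rule ccontr)
    assume "\<not> ?thesis"
    then have "xbias w c i = 0" using bi bj by linarith
    then show False using xbias_odd[of w c i] by simp
  qed
  then show ?thesis using eq B2 unfolding c'_def by (simp add: algebra_simps)
qed

lemma Phi_bound: "\<bar>Phi w c\<bar> \<le> int (length c) * (2 * int w + 1)"
proof -
  have b: "\<bar>sg c k * (\<Sum>d\<in>{-int w..int w}. sg c (idx (length c) k d))\<bar> \<le> 2 * int w + 1" for k
  proof -
    have "\<bar>\<Sum>d\<in>{-int w..int w}. sg c (idx (length c) k d)\<bar> \<le> (\<Sum>d\<in>{-int w..int w}. \<bar>sg c (idx (length c) k d)\<bar>)"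
      by (rule sum_abs)
    also have "\<dots> = (\<Sum>d\<in>{-int w..int w}. 1)" by (rule sum.cong) (auto simp: sg_def sgn_lab_def)
    finally show ?thesis by (simp add: sg_def sgn_lab_def abs_mult)
  qed
  have "\<bar>Phi w c\<bar> \<le> (\<Sum>k<length c. \<bar>sg c k * (\<Sum>d\<in>{-int w..int w}. sg c (idx (length c) k d))\<bar>)"
    unfolding Phi_def BB_def by (rule sum_abs)
  also have "\<dots> \<le> (\<Sum>k<length c. 2 * int w + 1)" by (rule sum_mono) (rule b)
  finally show ?thesis by simp
qed

definition Sp :: "nat \<Rightarrow> (nat \<times> nat) set" where "Sp n = {(i, j). i < j \<and> j < n}"

lemma Sp_fin: "finite (Sp n)"
  by (rule finite_subset[of _ "{..<n} \<times> {..<n}"]) (auto simp: Sp_def)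

lemma Sp_ne: "2 \<le> n \<Longrightarrow> Sp n \<noteq> {}"
proof -
  assume "2 \<le> n" then have "(0, 1) \<in> Sp n" by (simp add: Sp_def)
  then show ?thesis by blast
qed

definition fstep :: "nat \<Rightarrow> bool list \<Rightarrow> nat \<times> nat \<Rightarrow> bool list" where
  "fstep w cfg = (\<lambda>(i, j). if cfg ! i \<noteq> cfg ! j \<and> unhappy w cfg i \<and> unhappy w cfg j
                              then swap_nodes cfg i j else cfg)"

lemma step_eq: "2 \<le> length cfg \<Longrightarrow> step w cfg = map_pmf (fstep w cfg) (pmf_of_set (Sp (length cfg)))"
  unfolding step_def fstep_def Sp_def by simp

lemma length_fstep: "length (fstep w c p) = length c"
  unfolding fstep_def swap_nodes_def by (auto split: prod.splits)

lemma step_length: "c' \<in> set_pmf (step w c) \<Longrightarrow> length c' = length c"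
proof (cases "length c < 2")
  case True
  assume "c' \<in> set_pmf (step w c)" then show ?thesis using True unfolding step_def by simp
next
  case False
  assume "c' \<in> set_pmf (step w c)"
  then show ?thesis using False Sp_fin Sp_ne[of "length c"]
    by (auto simp: step_eq length_fstep)
qed

lemma fstep_Phi_strict:
  assumes n: "2*w+1 \<le> length c" and p: "(i, j) \<in> Sp (length c)"
    and cond: "c ! i \<noteq> c ! j" "unhappy w c i" "unhappy w c j"
  shows "Phi w (fstep w c (i, j)) \<ge> Phi w c + 4"
proof -
  have ij: "i < length c" "j < length c" "i \<noteq> j" using p unfolding Sp_def by auto
  have e: "fstep w c (i, j) = swap_nodes c i j" using cond unfolding fstep_def by simp
  show ?thesis
  proof (cases "c ! i")
    case True
    then show ?thesis unfolding e using Phi_swap[OF n ij(1,2) True] cond by auto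
  next
    case False
    then have "c ! j" using cond by auto
    moreover have "swap_nodes c i j = swap_nodes c j i"
      unfolding swap_nodes_def using ij(3) by (rule list_update_swap)
    ultimately show ?thesis unfolding e using Phi_swap[OF n ij(2,1)] cond False by auto
  qed
qed

lemma fstep_Phi_mono:
  assumes n: "2*w+1 \<le> length c" and p: "p \<in> Sp (length c)"
  shows "Phi w (fstep w c p) \<ge> Phi w c"
proof -
  obtain i j where pij: "p = (i, j)" by (cases p)
  show ?thesis
  proof (cases "c ! i \<noteq> c ! j \<and> unhappy w c i \<and> unhappy w c j")
    case True
    then show ?thesis using fstep_Phi_strict[OF n p[unfolded pij]] pij by force
  next
    case False
    then show ?thesis unfolding pij fstep_def by auto
  qed
qed

definition KK :: "nat \<Rightarrow> nat \<Rightarrow> int" where "KK w n = int n * (2 * int w + 1)"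
definition psi :: "nat \<Rightarrow> bool list \<Rightarrow> nat" where "psi w c = nat (Phi w c + KK w (length c))"
definition rho :: "nat \<Rightarrow> real" where "rho n = 1 - 1 / (2 * real (card (Sp n)))"

lemma psi_le: "psi w c \<le> nat (2 * KK w (length c))"
  using Phi_bound[of w c] unfolding psi_def KK_def by auto

lemma step_ineq:
  assumes n2: "2 \<le> length c" and n: "2*w+1 \<le> length c" and nf: "\<not> frozen w c"
  shows "(\<integral>\<^sup>+c'. ennreal ((1/2::real) ^ psi w c') \<partial>step w c) \<le> ennreal (rho (length c) * (1/2) ^ psi w c)"
proof -
  let ?n = "length c"
  let ?S = "Sp ?n"
  let ?v = "(1/2::real) ^ psi w c"
  define h where "h p = (1/2::real) ^ psi w (fstep w c p)" for p
  have fin: "finite ?S" by (rule Sp_fin)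
  have ne: "?S \<noteq> {}" using Sp_ne n2 by auto
  have N: "card ?S > 0" using fin ne by (simp add: card_gt_0_iff)
  have K0: "Phi w c + KK w ?n \<ge> 0" using Phi_bound[of w c] unfolding KK_def by auto
  have hle: "h p \<le> ?v" if "p \<in> ?S" for p
  proof -
    have "psi w c \<le> psi w (fstep w c p)"
      using fstep_Phi_mono[OF n that] unfolding psi_def length_fstep by auto
    then show ?thesis unfolding h_def by (rule power_decreasing) auto
  qed
  obtain i where i: "i < ?n" "c ! i" "unhappy w c i" using nf unfolding frozen_def by blast
  obtain j where j: "j < ?n" "\<not> c ! j" "unhappy w c j" using nf unfolding frozen_def by blast
  define p0 where "p0 = (min i j, max i j)"
  have ij: "i \<noteq> j" using i j by auto
  have p0S: "p0 \<in> ?S" unfolding p0_def Sp_def using i j ij by auto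
  have cond0: "c ! min i j \<noteq> c ! max i j" "unhappy w c (min i j)" "unhappy w c (max i j)"
    using i j ij by (auto simp: min_def max_def)
  have hp0: "h p0 \<le> ?v / 2"
  proof -
    have "Phi w (fstep w c p0) \<ge> Phi w c + 4"
      using fstep_Phi_strict[OF n p0S[unfolded p0_def] cond0] unfolding p0_def .
    then have "psi w c + 1 \<le> psi w (fstep w c p0)"
      using K0 unfolding psi_def length_fstep by auto
    then have "h p0 \<le> (1/2::real) ^ (psi w c + 1)" unfolding h_def by (rule power_decreasing) auto
    then show ?thesis by simp
  qed
  have "sum h ?S = h p0 + sum h (?S - {p0})" using fin p0S by (simp add: sum.remove)
  also have "sum h (?S - {p0}) \<le> sum (\<lambda>_. ?v) (?S - {p0})" by (rule sum_mono) (use hle in auto)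
  also have "\<dots> = (real (card ?S) - 1) * ?v" using fin p0S by (simp add: card_Diff_singleton of_nat_diff N Suc_leI)
  finally have sumle: "sum h ?S \<le> ?v / 2 + (real (card ?S) - 1) * ?v" using hp0 by linarith
  have real_ineq: "sum h ?S / real (card ?S) \<le> rho ?n * ?v"
  proof -
    have "rho ?n * ?v * real (card ?S) = ?v / 2 + (real (card ?S) - 1) * ?v"
      unfolding rho_def using N by (simp add: field_simps)
    then show ?thesis using sumle N by (simp add: divide_le_eq)
  qed
  have h0: "\<And>p. 0 \<le> h p" unfolding h_def by simp
  have "(\<integral>\<^sup>+c'. ennreal ((1/2::real) ^ psi w c') \<partial>step w c) = (\<integral>\<^sup>+p. ennreal (h p) \<partial>pmf_of_set ?S)"
    unfolding step_eq[OF n2] h_def by simp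
  also have "\<dots> = (\<Sum>p\<in>?S. ennreal (h p)) / of_nat (card ?S)"
    by (rule nn_integral_pmf_of_set[OF ne fin])
  also have "\<dots> = ennreal (sum h ?S / real (card ?S))"
    using h0 N by (simp add: ennreal_of_nat_eq_real_of_nat divide_ennreal sum_nonneg)
  also have "\<dots> \<le> ennreal (rho ?n * ?v)" using real_ineq by (rule ennreal_leI)
  finally show ?thesis .
qed

lemma init_set: "set_pmf (init_cfg n) = {cfg. length cfg = n}"
proof -
  have fin: "finite {cfg :: bool list. length cfg = n}"
    using finite_lists_length_eq[of "UNIV :: bool set" n] by simp
  have ne: "{cfg :: bool list. length cfg = n} \<noteq> {}"
    by (metis (mono_tags) empty_iff length_replicate mem_Collect_eq)
  show ?thesis unfolding init_cfg_def using fin ne by simp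
qed

lemma traj_support: "xs \<in> set_pmf (traj w n t) \<Longrightarrow> xs \<noteq> [] \<and> (\<forall>c\<in>set xs. length c = n)"
proof (induction t arbitrary: xs)
  case 0
  then show ?case by (auto simp: init_set)
next
  case (Suc t)
  then obtain ys c where ys: "ys \<in> set_pmf (traj w n t)" "c \<in> set_pmf (step w (last ys))" "xs = ys @ [c]"
    by auto
  from Suc.IH[OF ys(1)] have "ys \<noteq> []" "\<forall>c\<in>set ys. length c = n" by auto
  moreover have "length c = length (last ys)" using step_length[OF ys(2)] .
  ultimately show ?case using ys(3) by auto
qed

definition GG :: "nat \<Rightarrow> bool list list \<Rightarrow> ennreal" where
  "GG w xs = ennreal (if (\<forall>c\<in>set xs. \<not> frozen w c) then (1/2::real) ^ psi w (last xs) else 0)"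

lemma GG_rec:
  assumes n2: "2 \<le> n" and n: "2*w+1 \<le> n"
  shows "(\<integral>\<^sup>+xs. GG w xs \<partial>traj w n (Suc t)) \<le> ennreal (rho n) * (\<integral>\<^sup>+xs. GG w xs \<partial>traj w n t)"
proof -
  have "(\<integral>\<^sup>+xs. GG w xs \<partial>traj w n (Suc t)) = (\<integral>\<^sup>+xs. (\<integral>\<^sup>+c. GG w (xs @ [c]) \<partial>step w (last xs)) \<partial>traj w n t)"
    by simp
  also have "\<dots> \<le> (\<integral>\<^sup>+xs. ennreal (rho n) * GG w xs \<partial>traj w n t)"
  proof (rule nn_integral_mono_AE, unfold AE_measure_pmf_iff, intro ballI)
    fix xs assume xs: "xs \<in> set_pmf (traj w n t)"
    from traj_support[OF xs] have ne: "xs \<noteq> []" and ln: "length (last xs) = n" by auto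
    show "(\<integral>\<^sup>+c. GG w (xs @ [c]) \<partial>step w (last xs)) \<le> ennreal (rho n) * GG w xs"
    proof (cases "\<forall>c\<in>set xs. \<not> frozen w c")
      case False
      then have "\<And>c. GG w (xs @ [c]) = 0" unfolding GG_def by auto
      then show ?thesis by simp
    next
      case True
      have lnf: "\<not> frozen w (last xs)" using True ne by simp
      have "(\<integral>\<^sup>+c. GG w (xs @ [c]) \<partial>step w (last xs)) \<le> (\<integral>\<^sup>+c. ennreal ((1/2::real) ^ psi w c) \<partial>step w (last xs))"
        by (rule nn_integral_mono) (auto simp: GG_def intro: ennreal_leI)
      also have "\<dots> \<le> ennreal (rho n * (1/2) ^ psi w (last xs))"
        using step_ineq[of "last xs" w] ln n2 n lnf by simp
      also have "\<dots> = ennreal (rho n) * GG w xs"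
        unfolding GG_def using True by (simp add: ennreal_mult'')
      finally show ?thesis .
    qed
  qed
  also have "\<dots> = ennreal (rho n) * (\<integral>\<^sup>+xs. GG w xs \<partial>traj w n t)"
    by (rule nn_integral_cmult) simp
  finally show ?thesis .
qed

lemma rho_bounds: "2 \<le> n \<Longrightarrow> 0 \<le> rho n \<and> rho n < 1"
proof -
  assume "2 \<le> n"
  then have "card (Sp n) > 0" using Sp_fin Sp_ne by (simp add: card_gt_0_iff)
  then have "real (card (Sp n)) \<ge> 1" by simp
  then show ?thesis unfolding rho_def by (simp add: field_simps)
qed

lemma GG_bound:
  assumes n2: "2 \<le> n" and n: "2*w+1 \<le> n"
  shows "(\<integral>\<^sup>+xs. GG w xs \<partial>traj w n t) \<le> ennreal (rho n ^ t)"
proof (induction t)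
  case 0
  have "(\<integral>\<^sup>+xs. GG w xs \<partial>traj w n 0) \<le> (\<integral>\<^sup>+xs. 1 \<partial>traj w n 0)"
    by (rule nn_integral_mono) (auto simp: GG_def power_le_one)
  also have "\<dots> = 1" by (simp add: measure_pmf.emeasure_space_1)
  finally show ?case by simp
next
  case (Suc t)
  have r0: "0 \<le> rho n" using rho_bounds[OF n2] by simp
  have "(\<integral>\<^sup>+xs. GG w xs \<partial>traj w n (Suc t)) \<le> ennreal (rho n) * (\<integral>\<^sup>+xs. GG w xs \<partial>traj w n t)"
    by (rule GG_rec[OF n2 n])
  also have "\<dots> \<le> ennreal (rho n) * ennreal (rho n ^ t)" by (rule mult_left_mono[OF Suc]) simp
  also have "\<dots> = ennreal (rho n ^ Suc t)" using r0 by (simp add: ennreal_mult'')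
  finally show ?case .
qed

lemma nonreach_bound:
  assumes n2: "2 \<le> n" and n: "2*w+1 \<le> n"
  shows "measure_pmf.prob (traj w n t) {xs. \<forall>c\<in>set xs. \<not> frozen w c} \<le> 2 ^ nat (2 * KK w n) * rho n ^ t"
proof -
  let ?A = "{xs. \<forall>c\<in>set xs. \<not> frozen w c}"
  let ?M = "nat (2 * KK w n)"
  have "emeasure (traj w n t) ?A = (\<integral>\<^sup>+xs. indicator ?A xs \<partial>traj w n t)" by simp
  also have "\<dots> \<le> (\<integral>\<^sup>+xs. ennreal (2 ^ ?M) * GG w xs \<partial>traj w n t)"
  proof (rule nn_integral_mono_AE, unfold AE_measure_pmf_iff, intro ballI)
    fix xs assume xs: "xs \<in> set_pmf (traj w n t)"
    from traj_support[OF xs] have ne: "xs \<noteq> []" and ln: "length (last xs) = n" by auto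
    have "psi w (last xs) \<le> ?M" using psi_le[of w "last xs"] ln by simp
    then have "(1/2::real) ^ ?M \<le> (1/2) ^ psi w (last xs)" by (rule power_decreasing) auto
    then have "1 \<le> (2::real) ^ ?M * (1/2) ^ psi w (last xs)"
      by (simp add: power_one_over field_simps)
    then show "indicator ?A xs \<le> ennreal (2 ^ ?M) * GG w xs"
      unfolding GG_def by (auto simp: indicator_def ennreal_mult''[symmetric] ennreal_leI simp del: ennreal_numeral ennreal_power)
  qed
  also have "\<dots> = ennreal (2 ^ ?M) * (\<integral>\<^sup>+xs. GG w xs \<partial>traj w n t)"
    by (rule nn_integral_cmult) simp
  also have "\<dots> \<le> ennreal (2 ^ ?M) * ennreal (rho n ^ t)"
    by (rule mult_left_mono[OF GG_bound[OF n2 n]]) simp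
  also have "\<dots> = ennreal (2 ^ ?M * rho n ^ t)"
    by (rule ennreal_mult[symmetric]) (use rho_bounds[OF n2] in auto)
  finally have "emeasure (traj w n t) ?A \<le> ennreal (2 ^ ?M * rho n ^ t)" .
  then show ?thesis
    using rho_bounds[OF n2] by (simp add: measure_pmf.emeasure_eq_measure)
qed

lemma reach_within_ge:
  assumes n2: "2 \<le> n" and n: "2*w+1 \<le> n"
  shows "reach_within w n t \<ge> 1 - 2 ^ nat (2 * KK w n) * rho n ^ t"
proof -
  let ?A = "{xs. \<forall>c\<in>set xs. \<not> frozen w c}"
  have e: "{xs. \<exists>c\<in>set xs. frozen w c} = space (measure_pmf (traj w n t)) - ?A" by auto
  have "reach_within w n t = 1 - measure_pmf.prob (traj w n t) ?A"
    unfolding reach_within_def e by (rule measure_pmf.prob_compl) simp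
  then show ?thesis using nonreach_bound[OF n2 n, of t] by simp
qed

lemma reach_within_le: "reach_within w n t \<le> 1"
  unfolding reach_within_def by (rule measure_pmf.prob_le_1)

lemma reach_frozen_one:
  assumes n2: "2 \<le> n" and n: "2*w+1 \<le> n"
  shows "reach_frozen_prob w n = 1"
proof -
  have bdd: "bdd_above (range (reach_within w n))"
    by (rule bdd_aboveI[of _ 1]) (auto simp: reach_within_le)
  have le1: "reach_frozen_prob w n \<le> 1"
    unfolding reach_frozen_prob_def by (rule cSUP_least) (auto simp: reach_within_le)
  have ge1: "1 \<le> reach_frozen_prob w n"
  proof (rule field_le_epsilon)
    fix e :: real assume e: "0 < e"
    let ?C = "(2::real) ^ nat (2 * KK w n)"
    have r: "0 \<le> rho n" "rho n < 1" using rho_bounds[OF n2] by auto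
    have "(\<lambda>t. ?C * rho n ^ t) \<longlonglongrightarrow> ?C * 0"
      by (intro tendsto_mult tendsto_const LIMSEQ_power_zero) (use r in simp)
    then have "eventually (\<lambda>t. dist (?C * rho n ^ t) 0 < e) sequentially"
      using e by (simp add: tendsto_iff)
    then obtain N where "\<forall>t\<ge>N. dist (?C * rho n ^ t) 0 < e" unfolding eventually_sequentially by blast
    then have t: "dist (?C * rho n ^ N) 0 < e" by simp
    define t where "t = N"
    note t = t[folded t_def]
    then have "?C * rho n ^ t < e" using r by simp
    then have "1 \<le> reach_within w n t + e" using reach_within_ge[OF n2 n, of t] by linarith
    also have "reach_within w n t \<le> reach_frozen_prob w n"
      unfolding reach_frozen_prob_def by (rule cSUP_upper[OF _ bdd]) simp
    finally show "1 \<le> reach_frozen_prob w n + e" by simp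
  qed
  show ?thesis using le1 ge1 by simp
qed

theorem proposition1:
  fixes w :: nat
  shows "(\<lambda>n. reach_frozen_prob w n) \<longlonglongrightarrow> 1"
proof (rule tendsto_eventually)
  show "eventually (\<lambda>n. reach_frozen_prob w n = 1) sequentially"
    unfolding eventually_sequentially
    by (rule exI[of _ "2 * w + 2"]) (auto intro!: reach_frozen_one)
qed

end
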